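(* Consider an $N$-player quadratic game with costs $f_1,\ldots,f_N$, step sizes $\gamma_1,\ldots,\gamma_N>0$, and the associated matrix $W\in\mathbb{R}^{n\times n}$ and disturbed gradient-based learning dynamics described in the context, in which player $i$'s gradient is corrupted by an arbitrary disturbance. For $\ell\in[N]$ let $\mathcal{S}(\ell)=\{x=(x_1,\ldots,x_N)\in\mathbb{R}^n : x_m=0 \text{ for all } m\neq \ell\}$, and for a subspace $\mathcal{M}\subseteq\mathbb{R}^n$ let $\mathcal{M}^\perp=\{x\in\mathbb{R}^n : x^\top\tilde x=0\ \forall \tilde x\in\mathcal{M}\}$. For a player $j\neq i$, the following statements are equivalent: (i) Player $j$ is disturbance decoupled from player $i$. (ii) $W^k v\in\mathcal{S}(j)^\perp$ for all $v\in\mathcal{S}(i)$ and all integers $0\le k<n$. (iii) $\mathrm{im}(W^kE)\subseteq\mathrm{im}(Y)$ for all integers $0\le k<n$, where $E\in\mathbb{R}^{n\times n_i}$ and $Y\in\mathbb{R}^{n\times(n-n_j)}$ are any matrices with $\mathrm{im}(E)=\mathcal{S}(i)$ and $\mathrm{im}(Y)=\mathcal{S}(j)^\perp$.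
   Context: There are $N$ players, indexed by $[N]=\{1,\ldots,N\}$; player $\ell$ has action $x_\ell\in\mathbb{R}^{n_\ell}$, $n=\sum_{\ell=1}^N n_\ell$, and $x=(x_1,\ldots,x_N)\in\mathbb{R}^n$ is the joint action. A quadratic game has costs $f_\ell(x)=\tfrac12 x_\ell^\top P_\ell x_\ell + x_\ell^\top\big(\sum_{m\neq \ell}P_{\ell m}x_m + r_\ell\big)$ with $P_\ell\in\mathbb{R}^{n_\ell\times n_\ell}$ symmetric, $P_{\ell m}\in\mathbb{R}^{n_\ell\times n_m}$, $r_\ell\in\mathbb{R}^{n_\ell}$. Each player $\ell$ has step size $\gamma_\ell>0$ and updates $x_\ell^{k+1}=x_\ell^k-\gamma_\ell\big(D_\ell f_\ell(x^k)+d_\ell^k\big)$, where $D_\ell f_\ell=\partial f_\ell/\partial x_\ell$ and $d_\ell^k\in\mathbb{R}^{n_\ell}$ is an arbitrary additive disturbance. Let $W\in\mathbb{R}^{n\times n}$ be the block matrix with blocks $W_{\ell\ell}=I_{n_\ell}-\gamma_\ell P_\ell$ and $W_{\ell m}=-\gamma_\ell P_{\ell m}$ ($\ell\neq m$), let $\Gamma=\mathrm{blkdiag}(\gamma_1 I_{n_1},\ldots,\gamma_N I_{n_N})$ and $\bar r=(r_1,\ldots,r_N)\in\mathbb{R}^n$. Let $\mathcal{D}_i=\{d=(d_1,\ldots,d_N)\in\mathbb{R}^n : d_m=0\ \forall m\neq i\}$ (disturbance only in player $i$'s gradient). The uncorrupted and corrupted dynamics are $x^{k+1}=Wx^k-\Gamma\bar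 r$ and $y^{k+1}=Wy^k-\Gamma\bar r-\Gamma d^k$. Player $j\neq i$ is said to be disturbance decoupled from player $i$ if for every initial joint action $x^0$, taking $y^0=x^0$, one has $y_j^k=x_j^k$ for all $k\ge 0$ and every disturbance sequence $(d^k)_{k\ge0}$ with $d^k\in\mathcal{D}_i$ for all $k$. *)

theory Defs
  imports "HOL-Analysis.Analysis"
begin

(* Coordinates of R^n are the finite type 'n; players are the finite type 'p;
   pl c is the player owning coordinate c.  The joint matrix P has blocks
   P_l (coordinates of player l x player l) and P_lm (player l x player m). *)

definition n_of :: "('n::finite \<Rightarrow> 'p) \<Rightarrow> 'p \<Rightarrow> nat" where
  "n_of pl l = card {c. pl c = l}"

definition Wmat :: "('n::finite \<Rightarrow> 'p) \<Rightarrow> ('p \<Rightarrow> real) \<Rightarrow> real^'n^'n \<Rightarrow> real^'n^'n" where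
  "Wmat pl \<gamma> P = (\<chi> a b. (if a = b then 1 else 0) - \<gamma> (pl a) * P$a$b)"

definition Gam :: "('n::finite \<Rightarrow> 'p) \<Rightarrow> ('p \<Rightarrow> real) \<Rightarrow> real^'n^'n" where
  "Gam pl \<gamma> = (\<chi> a b. if a = b then \<gamma> (pl a) else 0)"

(* uncorrupted dynamics x^{k+1} = W x^k - Gamma r *)
fun xtraj :: "real^'n^'n \<Rightarrow> real^'n^'n \<Rightarrow> real^'n \<Rightarrow> real^'n \<Rightarrow> nat \<Rightarrow> real^'n::finite" where
  "xtraj W G r x0 0 = x0"
| "xtraj W G r x0 (Suc k) = W *v xtraj W G r x0 k - G *v r"

(* corrupted dynamics y^{k+1} = W y^k - Gamma r - Gamma d^k *)
fun ytraj :: "real^'n^'n \<Rightarrow> real^'n^'n \<Rightarrow> real^'n \<Rightarrow> real^'n \<Rightarrow> (nat \<Rightarrow> real^'n) \<Rightarrow> nat \<Rightarrow> real^'n::finite" where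
  "ytraj W G r y0 d 0 = y0"
| "ytraj W G r y0 d (Suc k) = W *v ytraj W G r y0 d k - G *v r - G *v d k"

(* S(l): vectors supported on player l's coordinates (also the disturbance set D_l) *)
definition Ssub :: "('n::finite \<Rightarrow> 'p) \<Rightarrow> 'p \<Rightarrow> (real^'n) set" where
  "Ssub pl l = {x. \<forall>c. pl c \<noteq> l \<longrightarrow> x$c = 0}"

definition orth :: "(real^'n::finite) set \<Rightarrow> (real^'n) set" where
  "orth M = {x. \<forall>y\<in>M. x \<bullet> y = 0}"

fun matpow :: "real^'n^'n \<Rightarrow> nat \<Rightarrow> real^'n^'n::finite" where
  "matpow W 0 = mat 1"
| "matpow W (Suc k) = W ** matpow W k"

definition dist_decoupled ::
  "('n::finite \<Rightarrow> 'p) \<Rightarrow> ('p \<Rightarrow> real) \<Rightarrow> real^'n^'n \<Rightarrow> real^'n \<Rightarrow> 'p \<Rightarrow> 'p \<Rightarrow> bool" where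
  "dist_decoupled pl \<gamma> P r i j \<longleftrightarrow>
     (\<forall>x0 d. (\<forall>k. d k \<in> Ssub pl i) \<longrightarrow>
        (\<forall>k c. pl c = j \<longrightarrow>
           ytraj (Wmat pl \<gamma> P) (Gam pl \<gamma>) r x0 d k $ c = xtraj (Wmat pl \<gamma> P) (Gam pl \<gamma>) r x0 k $ c))"

end

theory Submission imports Defs begin

definition Kry :: "real^'n^'n \<Rightarrow> (real^'n) set \<Rightarrow> nat \<Rightarrow> (real^'n::finite) set" where
  "Kry W S m = span {matpow W k *v v | k v. k < m \<and> v \<in> S}"

lemma Kry_mono: "m \<le> m' \<Longrightarrow> Kry W S m \<subseteq> Kry W S m'"
  unfolding Kry_def by (rule span_mono) (use order_less_le_trans in blast)

lemma Kry_subspace: "subspace (Kry W S m)"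
  unfolding Kry_def by simp

lemma Kry_mem: "k < m \<Longrightarrow> v \<in> S \<Longrightarrow> matpow W k *v v \<in> Kry W S m"
  unfolding Kry_def by (rule span_base) auto

lemma Kry_W: "(*v) W ` Kry W S m \<subseteq> Kry W S (Suc m)"
proof -
  have "(*v) W ` Kry W S m = span ((*v) W ` {matpow W k *v v | k v. k < m \<and> v \<in> S})"
    unfolding Kry_def by (simp add: span_linear_image matrix_vector_mul_linear)
  also have "\<dots> \<subseteq> Kry W S (Suc m)"
    unfolding Kry_def
  proof (rule span_mono, clarify)
    fix k v assume "k < m" "v \<in> S"
    then show "\<exists>k' v'. W *v (matpow W k *v v) = matpow W k' *v v' \<and> k' < Suc m \<and> v' \<in> S"
      by (intro exI[of _ "Suc k"] exI[of _ v]) (auto simp: matrix_vector_mul_assoc)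
  qed
  finally show ?thesis .
qed

lemma Kry_stab:
  assumes "Kry W S m = Kry W S (Suc m)"
  shows "Kry W S (m + t) = Kry W S m"
proof (induction t)
  case 0 then show ?case by simp
next
  case (Suc t)
  have "Kry W S (Suc (m + t)) \<subseteq> Kry W S (m + t)"
    unfolding Kry_def[of W S "Suc (m+t)"]
  proof (rule span_minimal)
    show "subspace (Kry W S (m + t))" unfolding Kry_def by simp
    show "{matpow W k *v v |k v. k < Suc (m + t) \<and> v \<in> S} \<subseteq> Kry W S (m + t)"
    proof clarify
      fix k v assume k: "k < Suc (m + t)" and v: "v \<in> S"
      show "matpow W k *v v \<in> Kry W S (m + t)"
      proof (cases k)
        case 0
        have "matpow W 0 *v v \<in> Kry W S (Suc m)" using v by (intro Kry_mem) auto
        also have "\<dots> = Kry W S m" using assms by simp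
        also have "\<dots> \<subseteq> Kry W S (m + t)" by (rule Kry_mono) simp
        finally show ?thesis using 0 by simp
      next
        case (Suc k')
        have "matpow W k' *v v \<in> Kry W S (m + t)" using k Suc v by (intro Kry_mem) auto
        also have "\<dots> = Kry W S m" using Suc.IH by simp
        finally have "W *v (matpow W k' *v v) \<in> Kry W S (Suc m)" using Kry_W by blast
        then show ?thesis using Suc Suc.IH assms by (simp add: matrix_vector_mul_assoc)
      qed
    qed
  qed
  then show ?case using Kry_mono[of "m+t" "Suc (m+t)" W S] Suc.IH by auto
qed

lemma Kry_exists_stab: "\<exists>m\<le>CARD('n). Kry W S m = Kry W (S::(real^'n::finite) set) (Suc m)"
proof (rule ccontr)
  assume "\<not> ?thesis"
  then have ne: "\<And>m. m \<le> CARD('n) \<Longrightarrow> Kry W S m \<noteq> Kry W S (Suc m)" by auto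
  have "m \<le> CARD('n) + 1 \<Longrightarrow> m \<le> dim (Kry W S m)" for m
  proof (induction m)
    case 0 then show ?case by simp
  next
    case (Suc m)
    have "dim (Kry W S m) < dim (Kry W S (Suc m))"
    proof (rule ccontr)
      assume "\<not> ?thesis"
      then have "Kry W S m = Kry W S (Suc m)"
        using subspace_dim_equal[OF Kry_subspace Kry_subspace Kry_mono[of m "Suc m" W S]] by simp
      then show False using ne Suc.prems by auto
    qed
    then show ?case using Suc by auto
  qed
  from this[of "CARD('n) + 1"] show False using dim_subset_UNIV_cart[of "Kry W S (CARD('n) + 1)"] by simp
qed

lemma Kry_all: "v \<in> S \<Longrightarrow> matpow W k *v v \<in> Kry W (S::(real^'n::finite) set) (CARD('n))"
proof -
  assume v: "v \<in> S"
  obtain m where m: "m \<le> CARD('n)" "Kry W S m = Kry W S (Suc m)" using Kry_exists_stab by blast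
  have "matpow W k *v v \<in> Kry W S (Suc k)" using v by (intro Kry_mem) auto
  show ?thesis
  proof (cases "Suc k \<le> CARD('n)")
    case True then show ?thesis using Kry_mono[of "Suc k" "CARD('n)"] \<open>matpow W k *v v \<in> Kry W S (Suc k)\<close> by auto
  next
    case False
    then have "Kry W S (Suc k) = Kry W S m" using Kry_stab[OF m(2), of "Suc k - m"] m by simp
    then show ?thesis using Kry_mono[OF m(1)] \<open>matpow W k *v v \<in> Kry W S (Suc k)\<close> by auto
  qed
qed

lemma orth_Ssub: "orth (Ssub pl j) = {x::real^'n::finite. \<forall>c. pl c = j \<longrightarrow> x$c = 0}"
proof (intro set_eqI iffI)
  fix x assume x: "x \<in> orth (Ssub pl j)"
  show "x \<in> {x. \<forall>c. pl c = j \<longrightarrow> x$c = 0}"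
  proof (intro CollectI allI impI)
    fix c assume "pl c = j"
    then have "axis c 1 \<in> Ssub pl j" by (auto simp: Ssub_def axis_def)
    then have "x \<bullet> axis c 1 = 0" using x by (auto simp: orth_def)
    then show "x$c = 0" by (simp add: inner_axis)
  qed
next
  fix x :: "real^'n" assume x: "x \<in> {x. \<forall>c. pl c = j \<longrightarrow> x$c = 0}"
  show "x \<in> orth (Ssub pl j)"
    unfolding orth_def
  proof clarify
    fix y assume y: "y \<in> Ssub pl j"
    have "x \<bullet> y = (\<Sum>c\<in>UNIV. x$c * y$c)" by (simp add: inner_vec_def)
    also have "\<dots> = 0" using x y by (intro sum.neutral) (auto simp: Ssub_def)
    finally show "x \<bullet> y = 0" .
  qed
qed

lemma subspace_orth_Ssub: "subspace (orth (Ssub pl j))"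
  unfolding orth_Ssub subspace_def by auto

lemma Gam_mult: "(Gam pl \<gamma> *v x)$a = \<gamma> (pl a) * x$a"
proof -
  have "(Gam pl \<gamma> *v x)$a = (\<Sum>j\<in>UNIV. if j = a then \<gamma> (pl a) * x$a else 0)"
    unfolding Gam_def matrix_vector_mult_def vec_lambda_beta by (intro sum.cong) auto
  then show ?thesis by simp
qed

lemma matpow_Suc': "matpow W (Suc k) = matpow W k ** W"
  by (induction k) (simp_all add: matrix_mul_assoc)

lemma traj_diff:
  "ytraj W G r x0 d (Suc k) - xtraj W G r x0 (Suc k)
     = W *v (ytraj W G r x0 d k - xtraj W G r x0 k) - G *v d k"
  by (simp add: matrix_vector_mult_diff_distrib)

lemma traj_inv:
  assumes "subspace Q" "\<And>x. x \<in> Q \<Longrightarrow> W *v x \<in> Q" "\<And>k. G *v d k \<in> Q"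
  shows "ytraj W G r x0 d k - xtraj W G r x0 k \<in> Q"
proof (induction k)
  case 0 then show ?case using assms(1) by (simp add: subspace_0)
next
  case (Suc k) then show ?case unfolding traj_diff
    using assms by (intro subspace_diff) auto
qed

lemma traj_impulse:
  assumes "G *v d 0 = - v" "\<And>t. d (Suc t) = 0"
  shows "ytraj W G r x0 d (Suc k) - xtraj W G r x0 (Suc k) = matpow W k *v v"
proof (induction k)
  case 0 then show ?case using assms(1) traj_diff[of W G r x0 d 0] by simp
next
  case (Suc k) then show ?case using assms(2) traj_diff[of W G r x0 d "Suc k"]
    by (simp add: matrix_vector_mul_assoc)
qed

lemma exists_sel:
  fixes C :: "'n::finite set"
  assumes "CARD('c::finite) = card C"
  shows "\<exists>E::real^'c^'n. range ((*v) E) = {x. \<forall>a. a \<notin> C \<longrightarrow> x$a = 0}"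
proof -
  obtain f :: "'c \<Rightarrow> 'n" where f: "bij_betw f UNIV C"
    using finite_same_card_bij[of "UNIV::'c set" C] assms by auto
  define E :: "real^'c^'n" where "E = (\<chi> a b. if f b = a then 1 else 0)"
  have Ex: "(E *v x)$a = (if a \<in> C then x$(inv_into UNIV f a) else 0)" for x a
  proof (cases "a \<in> C")
    case True
    then obtain b0 where b0: "f b0 = a" using f by (auto simp: bij_betw_def)
    have inj: "inj f" using f by (auto simp: bij_betw_def)
    have "(E *v x)$a = (\<Sum>b\<in>UNIV. if b = b0 then x$b0 else 0)"
      unfolding E_def matrix_vector_mult_def vec_lambda_beta
      by (intro sum.cong) (use b0 inj in \<open>auto simp: inj_eq\<close>)
    also have "\<dots> = x$b0" by simp
    finally show ?thesis using True b0 inj by (metis inv_f_f)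
  next
    case False
    then have "\<And>b. f b \<noteq> a" using f by (auto simp: bij_betw_def)
    then show ?thesis using False unfolding E_def matrix_vector_mult_def by simp
  qed
  have "range ((*v) E) = {x. \<forall>a. a \<notin> C \<longrightarrow> x$a = 0}"
  proof (intro set_eqI iffI)
    fix y assume "y \<in> range ((*v) E)" then show "y \<in> {x. \<forall>a. a \<notin> C \<longrightarrow> x$a = 0}"
      using Ex by auto
  next
    fix y :: "real^'n" assume y: "y \<in> {x. \<forall>a. a \<notin> C \<longrightarrow> x$a = 0}"
    have "E *v (\<chi> b. y$(f b)) = y"
    proof (rule vec_eq_iff[THEN iffD2], rule allI)
      fix a show "(E *v (\<chi> b. y$(f b)))$a = y$a"
        using y Ex f by (auto simp: bij_betw_inv_into_right)
    qed
    then show "y \<in> range ((*v) E)" by (metis rangeI)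
  qed
  then show ?thesis by blast
qed

theorem proposition1:
  fixes pl :: "'n::finite \<Rightarrow> 'p::finite"
    and \<gamma> :: "'p \<Rightarrow> real"
    and P :: "real^'n^'n"
    and r :: "real^'n"
    and i j :: 'p
  assumes players_nonempty: "\<forall>l. \<exists>c. pl c = l"
    and step_pos: "\<forall>l. \<gamma> l > 0"
    and P_sym: "\<forall>a b. pl a = pl b \<longrightarrow> P$a$b = P$b$a"
    and ij: "j \<noteq> i"
    and cardE: "CARD('ci::finite) = n_of pl i"
    and cardY: "CARD('cj::finite) = CARD('n) - n_of pl j"
  shows "(dist_decoupled pl \<gamma> P r i j
           \<longleftrightarrow> (\<forall>v\<in>Ssub pl i. \<forall>k<CARD('n). matpow (Wmat pl \<gamma> P) k *v v \<in> orth (Ssub pl j)))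
       \<and> (dist_decoupled pl \<gamma> P r i j
           \<longleftrightarrow> (\<forall>(E::real^'ci^'n) (Y::real^'cj^'n).
                 range ((*v) E) = Ssub pl i \<longrightarrow> range ((*v) Y) = orth (Ssub pl j) \<longrightarrow>
                 (\<forall>k<CARD('n). range ((*v) (matpow (Wmat pl \<gamma> P) k ** E)) \<subseteq> range ((*v) Y))))"
proof -
  define W where "W = Wmat pl \<gamma> P"
  define G where "G = Gam pl \<gamma>"
  have All_iff: "dist_decoupled pl \<gamma> P r i j \<longleftrightarrow>
      (\<forall>v\<in>Ssub pl i. \<forall>k. matpow W k *v v \<in> orth (Ssub pl j))"
  proof
    assume dd: "dist_decoupled pl \<gamma> P r i j"
    show "\<forall>v\<in>Ssub pl i. \<forall>k. matpow W k *v v \<in> orth (Ssub pl j)"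
    proof (intro ballI allI)
      fix v k assume v: "v \<in> Ssub pl i"
      define d :: "nat \<Rightarrow> real^'n" where
        "d t = (if t = 0 then (\<chi> c. - v$c / \<gamma> (pl c)) else 0)" for t
      have dS: "\<forall>t. d t \<in> Ssub pl i" using v by (auto simp: d_def Ssub_def)
      have Gd: "G *v d 0 = - v"
      proof (rule vec_eq_iff[THEN iffD2], rule allI)
        fix a show "(G *v d 0)$a = (- v)$a"
          using step_pos[rule_format, of "pl a"] by (simp add: G_def Gam_mult d_def)
      qed
      have imp: "ytraj W G r 0 d (Suc k) - xtraj W G r 0 (Suc k) = matpow W k *v v"
        using traj_impulse[of G d v W r 0 k] Gd by (simp add: d_def)
      have "\<forall>c. pl c = j \<longrightarrow> (matpow W k *v v)$c = 0"
      proof (intro allI impI)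
        fix c assume "pl c = j"
        then have "ytraj W G r 0 d (Suc k) $ c = xtraj W G r 0 (Suc k) $ c"
          using dd dS unfolding dist_decoupled_def W_def G_def by blast
        then show "(matpow W k *v v)$c = 0" using imp[symmetric] by simp
      qed
      then show "matpow W k *v v \<in> orth (Ssub pl j)" by (simp add: orth_Ssub)
    qed
  next
    assume A: "\<forall>v\<in>Ssub pl i. \<forall>k. matpow W k *v v \<in> orth (Ssub pl j)"
    define Q where "Q = {x. \<forall>m. matpow W m *v x \<in> orth (Ssub pl j)}"
    have Qc: "Q = {x. \<forall>m c. pl c = j \<longrightarrow> (matpow W m *v x)$c = 0}"
      unfolding Q_def orth_Ssub by auto
    have subQ: "subspace Q" unfolding Qc subspace_def
      by (auto simp: matrix_vector_right_distrib matrix_vector_mult_scaleR)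
    have WQ: "W *v x \<in> Q" if "x \<in> Q" for x
      unfolding Q_def
    proof (intro CollectI allI)
      fix m
      have "matpow W m *v (W *v x) = matpow W (Suc m) *v x"
        by (simp only: matpow_Suc' matrix_vector_mul_assoc)
      moreover have "matpow W (Suc m) *v x \<in> orth (Ssub pl j)" using that unfolding Q_def by blast
      ultimately show "matpow W m *v (W *v x) \<in> orth (Ssub pl j)" by (simp only:)
    qed
    show "dist_decoupled pl \<gamma> P r i j"
      unfolding dist_decoupled_def
    proof (intro allI impI)
      fix x0 and d :: "nat \<Rightarrow> real^'n" and k c assume d: "\<forall>k. d k \<in> Ssub pl i" and c: "pl c = j"
      have GdQ: "G *v d t \<in> Q" for t
      proof -
        have "G *v d t \<in> Ssub pl i" using d by (auto simp: Ssub_def G_def Gam_mult)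
        then show ?thesis using A unfolding Q_def by blast
      qed
      have "ytraj W G r x0 d k - xtraj W G r x0 k \<in> Q"
        by (rule traj_inv[OF subQ WQ GdQ])
      then have "(matpow W 0 *v (ytraj W G r x0 d k - xtraj W G r x0 k))$c = 0"
        using c unfolding Qc by blast
      then show "ytraj (Wmat pl \<gamma> P) (Gam pl \<gamma>) r x0 d k $ c = xtraj (Wmat pl \<gamma> P) (Gam pl \<gamma>) r x0 k $ c"
        by (simp add: W_def G_def)
    qed
  qed
  have ii_iff: "(\<forall>v\<in>Ssub pl i. \<forall>k<CARD('n). matpow W k *v v \<in> orth (Ssub pl j)) \<longleftrightarrow>
      (\<forall>v\<in>Ssub pl i. \<forall>k. matpow W k *v v \<in> orth (Ssub pl j))"
  proof
    assume A: "\<forall>v\<in>Ssub pl i. \<forall>k<CARD('n). matpow W k *v v \<in> orth (Ssub pl j)"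
    have "Kry W (Ssub pl i) CARD('n) \<subseteq> orth (Ssub pl j)"
      unfolding Kry_def by (rule span_minimal) (use A subspace_orth_Ssub in auto)
    then show "\<forall>v\<in>Ssub pl i. \<forall>k. matpow W k *v v \<in> orth (Ssub pl j)"
      using Kry_all by blast
  qed auto
  have rng: "range ((*v) (M ** E)) = (*v) M ` range ((*v) E)" for M :: "real^'n^'n" and E :: "real^'ci^'n"
    by (simp add: image_image matrix_vector_mul_assoc)
  obtain E0 :: "real^'ci^'n" where E0: "range ((*v) E0) = Ssub pl i"
  proof -
    have eq: "CARD('ci) = card {c. pl c = i}" using cardE by (simp add: n_of_def)
    obtain E :: "real^'ci^'n" where "range ((*v) E) = {x. \<forall>a. a \<notin> {c. pl c = i} \<longrightarrow> x$a = 0}"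
      using exists_sel[OF eq] by blast
    then show ?thesis using that by (simp add: Ssub_def)
  qed
  obtain Y0 :: "real^'cj^'n" where Y0: "range ((*v) Y0) = orth (Ssub pl j)"
  proof -
    have eq: "CARD('cj) = card (- {c. pl c = j})" using cardY
      by (simp add: n_of_def Compl_eq_Diff_UNIV card_Diff_subset)
    obtain Y :: "real^'cj^'n" where "range ((*v) Y) = {x. \<forall>a. a \<notin> - {c. pl c = j} \<longrightarrow> x$a = 0}"
      using exists_sel[OF eq] by blast
    then show ?thesis using that by (simp add: orth_Ssub)
  qed
  have iii_iff: "(\<forall>(E::real^'ci^'n) (Y::real^'cj^'n).
                 range ((*v) E) = Ssub pl i \<longrightarrow> range ((*v) Y) = orth (Ssub pl j) \<longrightarrow>
                 (\<forall>k<CARD('n). range ((*v) (matpow W k ** E)) \<subseteq> range ((*v) Y)))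
     \<longleftrightarrow> (\<forall>v\<in>Ssub pl i. \<forall>k<CARD('n). matpow W k *v v \<in> orth (Ssub pl j))"
  proof
    assume H: "\<forall>(E::real^'ci^'n) (Y::real^'cj^'n).
                 range ((*v) E) = Ssub pl i \<longrightarrow> range ((*v) Y) = orth (Ssub pl j) \<longrightarrow>
                 (\<forall>k<CARD('n). range ((*v) (matpow W k ** E)) \<subseteq> range ((*v) Y))"
    show "\<forall>v\<in>Ssub pl i. \<forall>k<CARD('n). matpow W k *v v \<in> orth (Ssub pl j)"
    proof (intro ballI allI impI)
      fix v k assume v: "v \<in> Ssub pl i" and k: "k < CARD('n)"
      have "range ((*v) (matpow W k ** E0)) \<subseteq> range ((*v) Y0)" using H[rule_format, OF E0 Y0 k] .
      moreover have "matpow W k *v v \<in> range ((*v) (matpow W k ** E0))"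
        unfolding rng E0 using v by blast
      ultimately show "matpow W k *v v \<in> orth (Ssub pl j)" using Y0 by blast
    qed
  next
    assume H: "\<forall>v\<in>Ssub pl i. \<forall>k<CARD('n). matpow W k *v v \<in> orth (Ssub pl j)"
    show "\<forall>(E::real^'ci^'n) (Y::real^'cj^'n).
                 range ((*v) E) = Ssub pl i \<longrightarrow> range ((*v) Y) = orth (Ssub pl j) \<longrightarrow>
                 (\<forall>k<CARD('n). range ((*v) (matpow W k ** E)) \<subseteq> range ((*v) Y))"
    proof (intro allI impI)
      fix E :: "real^'ci^'n" and Y :: "real^'cj^'n" and k
      assume E: "range ((*v) E) = Ssub pl i" and Y: "range ((*v) Y) = orth (Ssub pl j)" and k: "k < CARD('n)"
      show "range ((*v) (matpow W k ** E)) \<subseteq> range ((*v) Y)"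
        unfolding rng E Y using H k by blast
    qed
  qed
  show ?thesis unfolding W_def[symmetric] iii_iff ii_iff All_iff by simp
qed

end
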